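(* For the coprime hider strategy $y$, consider two disjoint intervals $[u\oplus\ell]_{n-1}$ and $[v\oplus s]_{n-1}$ (with $u,v,\ell,s$ nonnegative integers) such that $\ell+s\le c$. Then $$y([u\oplus\ell]_{n-1})+y([v\oplus s]_{n-1})\le y([u\oplus(\ell+s+1)]_{n-1}).$$
   Context: Let $k\ge2$, $n>2^k$, $c=2^k-2$ with $\gcd(c,n-1)=1$, and let $h,w$ be the positive integers with $h(n-1)-wc=1$ and $w\in\{1,\dots,n-2\}$ minimal. For integers $u,\ell$ and $r\ge1$, $[u\oplus\ell]_r=\{w\bmod r: u\le w\le u+\ell-1\}$; $[a,b]=\{a,\dots,b\}$; $y(S)=\sum_{i\in S}y_i$. Coprime hider strategy $y\in\mathbb{R}^{\{0,\dots,n-1\}}$: $g(v)=v\frac{h}{wc}$, $r=\lfloor c/h\rfloor$; $y_0=y_{n-1}=0$; starting at $v=1$, repeatedly choose the largest $r^*\in\{r,r+1\}$ with $g(v+r^*-1)\le y([1,v-1])+\frac1w$, set $y_i=\frac{1}{r^*w}$ for $i\in\{v,\dots,v+r^*-1\}$, replace $v$ by $v+r^*$; stop when $v>n-2$. *)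

theory Defs
  imports Main "HOL.Real"
begin

definition cyc_interval :: "nat \<Rightarrow> nat \<Rightarrow> nat \<Rightarrow> nat set" where
  "cyc_interval r u l = (\<lambda>x. x mod r) ` {u..<u + l}"

definition hider_g :: "nat \<Rightarrow> nat \<Rightarrow> nat \<Rightarrow> nat \<Rightarrow> real" where
  "hider_g c h w v = real v * real h / (real w * real c)"

text \<open>One step of the construction: state (v, y) with current block start v and
  the partially defined strategy y (zero where not yet assigned).
  r* is the largest element of {r, r+1} with g(v + r* - 1) <= y([1, v-1]) + 1/w
  (r is taken when r+1 fails).\<close>
definition hider_step :: "nat \<Rightarrow> nat \<Rightarrow> nat \<Rightarrow> nat \<Rightarrow> nat \<times> (nat \<Rightarrow> real) \<Rightarrow> nat \<times> (nat \<Rightarrow> real)" where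
  "hider_step n c h w st =
     (let v = fst st; y = snd st; r = nat \<lfloor>real c / real h\<rfloor> in
      if v > n - 2 then st
      else
        let rs = (if hider_g c h w (v + (r + 1) - 1) \<le> sum y {1..v-1} + 1 / real w
                  then r + 1 else r)
        in (v + rs, \<lambda>i. if v \<le> i \<and> i \<le> v + rs - 1 then 1 / (real rs * real w) else y i))"

text \<open>Iterating n times suffices since each step advances v by
  at least r >= 1 (or the process has stopped).\<close>
definition coprime_hider :: "nat \<Rightarrow> nat \<Rightarrow> nat \<Rightarrow> nat \<Rightarrow> nat \<Rightarrow> real" where
  "coprime_hider n c h w i =
     (if i = 0 \<or> i \<ge> n - 1 then 0
      else snd ((hider_step n c h w ^^ n) (1, \<lambda>_. 0)) i)"

end

theory Submission
  imports Defs
begin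

locale hid =
  fixes c h m w :: nat
  assumes hpos: "0 < h" and hc: "h \<le> c" and eq: "h * m = w * c + 1"
      and wm: "w + 1 \<le> m" and w1: "1 \<le> w"
begin

definition e :: "nat \<Rightarrow> nat" where "e k = k * c div h"
definition L :: "nat \<Rightarrow> nat" where "L k = e (Suc k) - e k"
definition K :: "nat \<Rightarrow> nat" where "K i = (i * h - 1) div c"
definition yv :: "nat \<Rightarrow> real" where "yv i = (if i = 0 then 0 else 1 / real (L (K i)))"
definition g :: "nat \<Rightarrow> real" where "g p = (\<Sum>i=1..p. yv i)"

lemma cpos: "0 < c" using hpos hc by simp

lemma e0[simp]: "e 0 = 0" by (simp add: e_def)

lemma e_add_lo: "e i + e j \<le> e (i + j)"
  unfolding e_def add_mult_distrib using div_add1_eq[of "i*c" "j*c" h] by linarith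

lemma e_add_hi: "e (i + j) \<le> e i + e j + 1"
proof -
  have "(i * c mod h + j * c mod h) div h \<le> 1"
  proof -
    have "i * c mod h + j * c mod h < 2 * h" using hpos
      by (metis add_less_mono mod_less_divisor mult_2)
    then show ?thesis using hpos
      by (metis Suc_1 div_less_iff_less_mult less_Suc_eq_le)
  qed
  then show ?thesis unfolding e_def add_mult_distrib using div_add1_eq[of "i*c" "j*c" h] by linarith
qed

lemma e1: "1 \<le> e 1" unfolding e_def using hc hpos
  by (simp add: less_eq_div_iff_mult_less_eq)

lemma L_pos: "1 \<le> L k"
  using e_add_lo[of k 1] e1 unfolding L_def by simp

lemma e_mono_less: "e k < e (Suc k)" using L_pos[of k] unfolding L_def by simp

lemma e_mono: "k \<le> k' \<Longrightarrow> e k \<le> e k'"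
  using e_add_lo[of k "k'-k"] by simp

lemma e_strict: "k < k' \<Longrightarrow> e k < e k'"
  by (metis Suc_leI e_mono e_mono_less order_less_le_trans)

lemma wc_eq: "w * c = h * (m - 1) + (h - 1)"
proof -
  have a: "h * (m - 1) + h = h * m" using wm by (cases m) auto
  show ?thesis using eq hpos a by linarith
qed

lemma ew: "e w = m - 1"
  unfolding e_def by (rule div_nat_eqI) (use wc_eq hpos in auto)

lemma K_eq: assumes "e k < i" "i \<le> e (Suc k)" shows "K i = k"
proof -
  have 1: "k * c < i * h" using assms(1) hpos unfolding e_def
    by (simp add: div_less_iff_less_mult)
  have 2: "i * h \<le> Suc k * c" using assms(2) hpos unfolding e_def
    by (simp add: less_eq_div_iff_mult_less_eq)
  show ?thesis unfolding K_def
    apply (rule div_nat_eqI) using 1 2 by (auto simp: mult.commute)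
qed

lemma yv_blk: "e k < i \<Longrightarrow> i \<le> e (Suc k) \<Longrightarrow> yv i = 1 / real (L k)"
  using K_eq unfolding yv_def by auto

lemma yv_nonneg: "0 \<le> yv i" unfolding yv_def by auto

lemma g_Suc: "g (Suc p) = g p + yv (Suc p)"
  unfolding g_def by simp

lemma g_mono: "p \<le> q \<Longrightarrow> g p \<le> g q"
proof (induction q)
  case 0 then show ?case by simp
next
  case (Suc q) then show ?case using yv_nonneg[of "Suc q"] g_Suc[of q]
    by (cases "p = Suc q") auto
qed

lemma g_blk_rel: "t \<le> L k \<Longrightarrow> g (e k + t) = g (e k) + real t / real (L k)"
proof (induction t)
  case 0 then show ?case by simp
next
  case (Suc t)
  have "yv (Suc (e k + t)) = 1 / real (L k)"
    apply (rule yv_blk) using Suc.prems unfolding L_def by auto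
  then show ?case using Suc g_Suc[of "e k + t"] by (simp add: add_divide_distrib)
qed

lemma g_e: "g (e k) = real k"
proof (induction k)
  case 0 then show ?case by (simp add: g_def)
next
  case (Suc k)
  have "e (Suc k) = e k + L k" unfolding L_def using e_mono_less[of k] by simp
  then show ?case using g_blk_rel[of "L k" k] Suc L_pos[of k] by simp
qed

lemma g_blk: "t \<le> L k \<Longrightarrow> g (e k + t) = real k + real t / real (L k)"
  using g_blk_rel g_e by simp

lemma rep: "\<exists>k t. p = e k + t \<and> t < L k"
proof (induction p)
  case 0 then show ?case using L_pos[of 0] by (intro exI[of _ 0]) auto
next
  case (Suc p)
  then obtain k t where kt: "p = e k + t" "t < L k" by blast
  show ?case
  proof (cases "Suc t < L k")
    case True then show ?thesis using kt by (intro exI[of _ k] exI[of _ "Suc t"]) auto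
  next
    case False
    then have "Suc p = e (Suc k) + 0" using kt unfolding L_def by auto
    then show ?thesis using L_pos[of "Suc k"] by (intro exI[of _ "Suc k"] exI[of _ 0]) auto
  qed
qed

lemma L_real: "real (L k) = real (e (Suc k)) - real (e k)"
  unfolding L_def using e_mono_less[of k] by (simp add: of_nat_diff)

lemma gle: assumes "0 \<le> \<phi>" "\<phi> \<le> 1" "real p \<le> real (e k) + \<phi> * real (L k)"
  shows "g p \<le> real k + \<phi>"
proof (cases "p \<le> e k")
  case True then show ?thesis using g_mono[OF True] g_e[of k] assms by simp
next
  case False
  define t where "t = p - e k"
  have p: "p = e k + t" using False t_def by simp
  have Lp: "0 < real (L k)" using L_pos[of k] by simp
  have "real t \<le> \<phi> * real (L k)" using assms(3) p by simp
  moreover have "\<phi> * real (L k) \<le> real (L k)" using assms(2) Lp by simp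
  ultimately have tL: "t \<le> L k" by linarith
  have "real t / real (L k) \<le> \<phi>" using \<open>real t \<le> \<phi> * real (L k)\<close> Lp
    by (simp add: divide_le_eq)
  then show ?thesis using g_blk[OF tL] p by simp
qed

lemma gge: assumes "0 \<le> \<phi>" "\<phi> \<le> 1" "real (e k) + \<phi> * real (L k) \<le> real p"
  shows "real k + \<phi> \<le> g p"
proof (cases "e (Suc k) \<le> p")
  case True then show ?thesis using g_mono[OF True] g_e[of "Suc k"] assms by simp
next
  case False
  have Lp: "0 < real (L k)" using L_pos[of k] by simp
  have "0 \<le> \<phi> * real (L k)" using assms Lp by simp
  then have "e k \<le> p" using assms(3) by linarith
  define t where "t = p - e k"
  have p: "p = e k + t" using \<open>e k \<le> p\<close> t_def by simp
  have tL: "t \<le> L k" using False p unfolding L_def by simp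
  have "\<phi> * real (L k) \<le> real t" using assms(3) p by simp
  then have "\<phi> \<le> real t / real (L k)" using Lp by (simp add: le_divide_eq)
  then show ?thesis using g_blk[OF tL] p by simp
qed

lemma tri1: fixes a0 a1 b0 b1 s0 s1 x y :: real
  assumes "0\<le>x" "0\<le>y" "x+y \<le> 1" "a0+b0 \<le> s0" "a1+b0 \<le> s1" "a0+b1 \<le> s1"
  shows "a0 + x*(a1-a0) + b0 + y*(b1-b0) \<le> s0 + (x+y)*(s1-s0)"
proof -
  have id: "s0 + (x+y)*(s1-s0) - (a0 + x*(a1-a0) + b0 + y*(b1-b0))
     = (1-x-y)*(s0-a0-b0) + x*(s1-a1-b0) + y*(s1-a0-b1)" by (simp add: algebra_simps)
  have "0 \<le> (1-x-y)*(s0-a0-b0)" using assms by simp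
  moreover have "0 \<le> x*(s1-a1-b0)" using assms by simp
  moreover have "0 \<le> y*(s1-a0-b1)" using assms by simp
  ultimately show ?thesis using id by linarith
qed

lemma tri1': fixes a0 a1 b0 b1 s0 s1 x y :: real
  assumes "0\<le>x" "0\<le>y" "x+y \<le> 1" "s0 \<le> a0+b0+1" "s1 \<le> a1+b0+1" "s1 \<le> a0+b1+1"
  shows "s0 + (x+y)*(s1-s0) \<le> a0 + x*(a1-a0) + b0 + y*(b1-b0) + 1"
proof -
  have id: "a0 + x*(a1-a0) + b0 + y*(b1-b0) + 1 - (s0 + (x+y)*(s1-s0))
     = (1-x-y)*(a0+b0+1-s0) + x*(a1+b0+1-s1) + y*(a0+b1+1-s1)" by (simp add: algebra_simps)
  have "0 \<le> (1-x-y)*(a0+b0+1-s0)" using assms by simp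
  moreover have "0 \<le> x*(a1+b0+1-s1)" using assms by simp
  moreover have "0 \<le> y*(a0+b1+1-s1)" using assms by simp
  ultimately show ?thesis using id by linarith
qed

lemma tri2: fixes a0 a1 b0 b1 s1 s2 x y :: real
  assumes "x\<le>1" "y\<le>1" "1 \<le> x+y" "a1+b0 \<le> s1" "a0+b1 \<le> s1" "a1+b1 \<le> s2"
  shows "a0 + x*(a1-a0) + b0 + y*(b1-b0) \<le> s1 + (x+y-1)*(s2-s1)"
proof -
  have id: "s1 + (x+y-1)*(s2-s1) - (a0 + x*(a1-a0) + b0 + y*(b1-b0))
     = (1-y)*(s1-a1-b0) + (1-x)*(s1-a0-b1) + (x+y-1)*(s2-a1-b1)" by (simp add: algebra_simps)
  have "0 \<le> (1-y)*(s1-a1-b0)" using assms by simp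
  moreover have "0 \<le> (1-x)*(s1-a0-b1)" using assms by simp
  moreover have "0 \<le> (x+y-1)*(s2-a1-b1)" using assms by simp
  ultimately show ?thesis using id by linarith
qed

lemma tri2': fixes a0 a1 b0 b1 s1 s2 x y :: real
  assumes "x\<le>1" "y\<le>1" "1 \<le> x+y" "s1 \<le> a1+b0+1" "s1 \<le> a0+b1+1" "s2 \<le> a1+b1+1"
  shows "s1 + (x+y-1)*(s2-s1) \<le> a0 + x*(a1-a0) + b0 + y*(b1-b0) + 1"
proof -
  have id: "a0 + x*(a1-a0) + b0 + y*(b1-b0) + 1 - (s1 + (x+y-1)*(s2-s1))
     = (1-y)*(a1+b0+1-s1) + (1-x)*(a0+b1+1-s1) + (x+y-1)*(a1+b1+1-s2)" by (simp add: algebra_simps)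
  have "0 \<le> (1-y)*(a1+b0+1-s1)" using assms by simp
  moreover have "0 \<le> (1-x)*(a0+b1+1-s1)" using assms by simp
  moreover have "0 \<le> (x+y-1)*(a1+b1+1-s2)" using assms by simp
  ultimately show ?thesis using id by linarith
qed

lemma e_lo_r: "real (e i) + real (e j) \<le> real (e (i+j))"
  using e_add_lo[of i j] by (metis of_nat_add of_nat_le_iff)
lemma e_hi_r: "real (e (i+j)) \<le> real (e i) + real (e j) + 1"
  using e_add_hi[of i j] by (metis of_nat_1 of_nat_add of_nat_le_iff)

lemma g_sub_sup: "g (a + b) \<le> g a + g b \<and> g a + g b \<le> g (a + b + 1)"
proof -
  obtain i s where a: "a = e i + s" "s < L i" using rep by blast
  obtain j t where b: "b = e j + t" "t < L j" using rep by blast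
  define x where "x = real s / real (L i)"
  define y where "y = real t / real (L j)"
  have Li: "0 < real (L i)" using L_pos[of i] by linarith
  have Lj: "0 < real (L j)" using L_pos[of j] by linarith
  have x0: "0 \<le> x" and x1: "x < 1" using a Li unfolding x_def by auto
  have y0: "0 \<le> y" and y1: "y < 1" using b Lj unfolding y_def by auto
  have ga: "g a = real i + x" using g_blk[of s i] a unfolding x_def by simp
  have gb: "g b = real j + y" using g_blk[of t j] b unfolding y_def by simp
  have sx: "real s = x * (real (e (Suc i)) - real (e i))" using Li unfolding x_def L_real[symmetric] by simp
  have ty: "real t = y * (real (e (Suc j)) - real (e j))" using Lj unfolding y_def L_real[symmetric] by simp
  have ab: "real (a + b) = real (e i) + x * (real (e (Suc i)) - real (e i)) + real (e j) + y * (real (e (Suc j)) - real (e j))"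
    using a b sx ty by simp
  have v00: "real (e i) + real (e j) \<le> real (e (i+j))" "real (e (i+j)) \<le> real (e i) + real (e j) + 1"
    using e_lo_r e_hi_r by auto
  have v10: "real (e (Suc i)) + real (e j) \<le> real (e (Suc (i+j)))" "real (e (Suc (i+j))) \<le> real (e (Suc i)) + real (e j) + 1"
    using e_lo_r[of "Suc i" j] e_hi_r[of "Suc i" j] by auto
  have v01: "real (e i) + real (e (Suc j)) \<le> real (e (Suc (i+j)))" "real (e (Suc (i+j))) \<le> real (e i) + real (e (Suc j)) + 1"
    using e_lo_r[of i "Suc j"] e_hi_r[of i "Suc j"] by auto
  have v11: "real (e (Suc i)) + real (e (Suc j)) \<le> real (e (Suc (Suc (i+j))))" "real (e (Suc (Suc (i+j)))) \<le> real (e (Suc i)) + real (e (Suc j)) + 1"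
    using e_lo_r[of "Suc i" "Suc j"] e_hi_r[of "Suc i" "Suc j"] by auto
  show ?thesis
  proof (cases "x + y \<le> 1")
    case True
    have up: "real (a + b) \<le> real (e (i+j)) + (x+y) * real (L (i+j))"
      unfolding ab L_real by (rule tri1) (use x0 y0 True v00 v10 v01 in auto)
    have lo: "real (e (i+j)) + (x+y) * real (L (i+j)) \<le> real (a + b + 1)"
      using tri1'[of x y "real (e (i+j))" "real (e i)" "real (e j)" "real (e (Suc (i+j)))" "real (e (Suc i))" "real (e (Suc j))"]
        x0 y0 True v00 v10 v01 ab unfolding L_real by simp
    have "g (a+b) \<le> real (i+j) + (x+y)" by (rule gle) (use x0 y0 True up in auto)
    moreover have "real (i+j) + (x+y) \<le> g (a+b+1)" by (rule gge) (use x0 y0 True lo in auto)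
    ultimately show ?thesis using ga gb by simp
  next
    case False
    have up: "real (a + b) \<le> real (e (Suc (i+j))) + (x+y-1) * real (L (Suc (i+j)))"
      unfolding ab L_real by (rule tri2) (use x1 y1 False v11 v10 v01 in auto)
    have lo: "real (e (Suc (i+j))) + (x+y-1) * real (L (Suc (i+j))) \<le> real (a + b + 1)"
      using tri2'[of x y "real (e (Suc (i+j)))" "real (e (Suc i))" "real (e j)" "real (e i)" "real (e (Suc j))" "real (e (Suc (Suc (i+j))))"]
        x1 y1 False v11 v10 v01 ab unfolding L_real by simp
    have "g (a+b) \<le> real (Suc (i+j)) + (x+y-1)" by (rule gle) (use x1 y1 False up in auto)
    moreover have "real (Suc (i+j)) + (x+y-1) \<le> g (a+b+1)" by (rule gge) (use x1 y1 False lo in auto)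
    ultimately show ?thesis using ga gb by simp
  qed
qed

lemma e_refl: assumes "k \<le> w" shows "e (w - k) = m - 1 - e k"
proof -
  define E where "E = e k"
  define \<rho> where "\<rho> = k * c mod h"
  have kc: "h * E + \<rho> = k * c" unfolding E_def \<rho>_def e_def by simp
  have rh: "\<rho> < h" unfolding \<rho>_def using hpos by simp
  have Em: "E \<le> m - 1" unfolding E_def using e_mono[OF assms] ew by simp
  have s: "(w - k) * c + k * c = w * c" using assms by (metis add_mult_distrib le_add_diff_inverse2)
  have hm: "h * (m - 1 - E) + h * E = h * (m - 1)" using Em
    by (metis add_mult_distrib2 le_add_diff_inverse2)
  have "(w - k) * c = h * (m - 1 - E) + (h - 1 - \<rho>)"
    using s kc wc_eq hm rh by linarith
  then have "e (w - k) = (h * (m - 1 - E) + (h - 1 - \<rho>)) div h" unfolding e_def by simp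
  also have "\<dots> = m - 1 - E" by (rule div_nat_eqI) (use hpos rh in auto)
  finally show ?thesis unfolding E_def .
qed

lemma yv_sym: assumes "1 \<le> i" "i \<le> m - 1" shows "yv (m - i) = yv i"
proof -
  obtain k t where kt: "i - 1 = e k + t" "t < L k" using rep by blast
  have blk: "e k < i" "i \<le> e (Suc k)" using kt assms unfolding L_def by auto
  have kw: "k < w"
  proof (rule ccontr)
    assume "\<not> k < w"
    then have "e w \<le> e k" using e_mono by simp
    then show False using blk ew assms by simp
  qed
  have y1: "yv i = 1 / real (L k)" using yv_blk[OF blk] .
  have r1: "e (w - Suc k) = m - 1 - e (Suc k)" using e_refl[of "Suc k"] kw by simp
  have wk: "Suc (w - Suc k) = w - k" using kw by simp
  have r2: "e (Suc (w - Suc k)) = m - 1 - e k" unfolding wk using e_refl[of k] kw by simp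
  have ekm: "e (Suc k) \<le> m - 1" using e_mono[of "Suc k" w] kw ew by simp
  have b2: "e (w - Suc k) < m - i" "m - i \<le> e (Suc (w - Suc k))"
    using r1 r2 blk ekm assms by auto
  have "L (w - Suc k) = L k" unfolding L_def using r1 r2 ekm e_mono_less[of k] by simp
  then show ?thesis using yv_blk[OF b2] y1 by simp
qed

lemma g_sym: "p \<le> m - 1 \<Longrightarrow> g (m - 1) - g (m - 1 - p) = g p"
proof (induction p)
  case 0 then show ?case by (simp add: g_def)
next
  case (Suc p)
  define q where "q = m - 1 - Suc p"
  have q1: "m - 1 - p = Suc q" using Suc.prems unfolding q_def by simp
  have "g (Suc q) = g q + yv (Suc q)" by (rule g_Suc)
  moreover have "Suc q = m - Suc p" using q1 by simp
  moreover have "yv (m - Suc p) = yv (Suc p)" using yv_sym[of "Suc p"] Suc.prems by simp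
  ultimately show ?case using Suc g_Suc[of p] q1 unfolding q_def by simp
qed

lemma hider_inv: "j \<le> w \<Longrightarrow> (hider_step (Suc m) c h w ^^ j) (1, \<lambda>_. 0)
   = (e j + 1, \<lambda>i. if 1 \<le> i \<and> i \<le> e j then yv i / real w else 0)"
proof (induction j)
  case 0 then show ?case by (auto simp: fun_eq_iff)
next
  case (Suc j)
  define Yj where "Yj = (\<lambda>i. if 1 \<le> i \<and> i \<le> e j then yv i / real w else 0)"
  have IH: "(hider_step (Suc m) c h w ^^ j) (1, \<lambda>_. 0) = (e j + 1, Yj)"
    using Suc unfolding Yj_def by simp
  have jw: "j < w" using Suc.prems by simp
  have ejm: "e j + 1 \<le> m - 1" using e_strict[OF jw] ew by simp
  have nle: "\<not> (e j + 1 > Suc m - 2)" using ejm by simp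
  have r: "nat \<lfloor>real c / real h\<rfloor> = e 1" by (simp add: floor_divide_of_nat_eq e_def)
  have wpos: "0 < real w" using w1 by simp
  have cposr: "0 < real c" using cpos by simp
  have S: "sum Yj {1..e j + 1 - 1} = real j / real w"
  proof -
    have "sum Yj {1..e j + 1 - 1} = (\<Sum>i=1..e j. yv i / real w)"
      unfolding Yj_def by (rule sum.cong) auto
    also have "\<dots> = g (e j) / real w" unfolding g_def by (simp add: sum_divide_distrib)
    finally show ?thesis using g_e by simp
  qed
  have gen: "\<And>a b. a / real w \<le> b / real w \<longleftrightarrow> a \<le> b" using wpos by (simp add: divide_le_cancel)
  define X where "X = e j + 1 + e 1"
  have hg: "hider_g c h w (e j + 1 + (e 1 + 1) - 1) = real X * real h / real c / real w"
    unfolding hider_g_def X_def by simp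
  have cond: "(hider_g c h w (e j + 1 + (e 1 + 1) - 1) \<le> real j / real w + 1 / real w)
      \<longleftrightarrow> X \<le> e (Suc j)"
  proof -
    have "(hider_g c h w (e j + 1 + (e 1 + 1) - 1) \<le> real j / real w + 1 / real w)
        \<longleftrightarrow> real X * real h / real c / real w \<le> (real j + 1) / real w"
      unfolding hg by (simp add: add_divide_distrib)
    also have "\<dots> \<longleftrightarrow> real X * real h / real c \<le> real j + 1"
      by (rule gen)
    also have "\<dots> \<longleftrightarrow> real X * real h \<le> (real j + 1) * real c"
      using cposr by (simp add: divide_le_eq)
    also have "\<dots> \<longleftrightarrow> X * h \<le> Suc j * c"
      by (metis of_nat_Suc of_nat_le_iff of_nat_mult add.commute)
    also have "\<dots> \<longleftrightarrow> X \<le> e (Suc j)" unfolding e_def using hpos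
      by (simp add: less_eq_div_iff_mult_less_eq)
    finally show ?thesis .
  qed
  have lo: "e j + e 1 \<le> e (Suc j)" using e_add_lo[of j 1] by simp
  have hi: "e (Suc j) \<le> e j + e 1 + 1" using e_add_hi[of j 1] by simp
  define rs where "rs = (if X \<le> e (Suc j) then e 1 + 1 else e 1)"
  have rsL: "rs = L j" unfolding rs_def L_def X_def using lo hi by auto
  have rs1: "e j + 1 + rs = e (Suc j) + 1" using rsL e_mono_less[of j] unfolding L_def by simp
  have step: "hider_step (Suc m) c h w (e j + 1, Yj) =
     (e j + 1 + rs, \<lambda>i. if e j + 1 \<le> i \<and> i \<le> e j + 1 + rs - 1 then 1 / (real rs * real w) else Yj i)"
    unfolding hider_step_def Let_def fst_conv snd_conv r using nle S cond unfolding rs_def by simp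
  have funeq: "(\<lambda>i. if e j + 1 \<le> i \<and> i \<le> e j + 1 + rs - 1 then 1 / (real rs * real w) else Yj i)
     = (\<lambda>i. if 1 \<le> i \<and> i \<le> e (Suc j) then yv i / real w else 0)"
  proof
    fix i
    show "(if e j + 1 \<le> i \<and> i \<le> e j + 1 + rs - 1 then 1 / (real rs * real w) else Yj i)
     = (if 1 \<le> i \<and> i \<le> e (Suc j) then yv i / real w else 0)"
    proof (cases "e j + 1 \<le> i \<and> i \<le> e (Suc j)")
      case True
      then have "yv i = 1 / real (L j)" using yv_blk[of j i] by simp
      then show ?thesis using True rs1 rsL by simp
    next
      case False
      then show ?thesis using rs1 e_mono_less[of j] unfolding Yj_def by auto
    qed
  qed
  show ?case using IH step funeq rs1 by simp
qed

lemma hider_val: assumes "1 \<le> i" "i \<le> m - 1"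
  shows "coprime_hider (Suc m) c h w i = yv i / real w"
proof -
  define Yw where "Yw = (\<lambda>i. if 1 \<le> i \<and> i \<le> e w then yv i / real w else 0)"
  have A: "(hider_step (Suc m) c h w ^^ w) (1, \<lambda>_. 0) = (m, Yw)"
    using hider_inv[of w] ew wm unfolding Yw_def by simp
  have fix1: "hider_step (Suc m) c h w (m, Yw) = (m, Yw)"
    unfolding hider_step_def Let_def using wm by simp
  have fixn: "(hider_step (Suc m) c h w ^^ q) (m, Yw) = (m, Yw)" for q
    by (induction q) (use fix1 in auto)
  have "(hider_step (Suc m) c h w ^^ Suc m) (1, \<lambda>_. 0) = (m, Yw)"
  proof -
    have "Suc m = (Suc m - w) + w" using wm by simp
    then have "(hider_step (Suc m) c h w ^^ Suc m) = (hider_step (Suc m) c h w ^^ (Suc m - w)) \<circ> (hider_step (Suc m) c h w ^^ w)"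
      by (metis funpow_add)
    then show ?thesis using A fixn by simp
  qed
  then show ?thesis unfolding coprime_hider_def Yw_def using assms ew by auto
qed

lemma hider_0: "coprime_hider (Suc m) c h w 0 = 0"
  unfolding coprime_hider_def by simp

abbreviation Y where "Y \<equiv> coprime_hider (Suc m) c h w"

definition F :: "nat \<Rightarrow> real" where "F p = (\<Sum>x<p. Y x)"

lemma F_g: "1 \<le> p \<Longrightarrow> p \<le> m \<Longrightarrow> F p * real w = g (p - 1)"
proof (induction p)
  case 0 then show ?case by simp
next
  case (Suc p)
  show ?case
  proof (cases "p = 0")
    case True then show ?thesis by (simp add: F_def hider_0 g_def)
  next
    case False
    have "F (Suc p) = F p + Y p" unfolding F_def by simp
    moreover have "Y p = yv p / real w" using hider_val[of p] False Suc.prems by simp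
    moreover have "g p = g (p - 1) + yv p" using g_Suc[of "p - 1"] False by simp
    ultimately show ?thesis using Suc False w1 by (simp add: algebra_simps)
  qed
qed

lemma F0: "F 0 = 0" unfolding F_def by simp

lemma win_in: assumes "u + t \<le> m" shows "(\<Sum>x\<in>{u..<u+t}. Y (x mod m)) = F (u + t) - F u"
proof -
  have "(\<Sum>x\<in>{u..<u+t}. Y (x mod m)) = (\<Sum>x\<in>{u..<u+t}. Y x)"
    by (rule sum.cong) (use assms in auto)
  also have "\<dots> = F (u + t) - F u" unfolding F_def
    using sum_diff_nat_ivl[of 0 u "u+t" Y] by (simp add: lessThan_atLeast0)
  finally show ?thesis .
qed

lemma win_out: assumes "m < u + t" "u \<le> m" "t \<le> m"
  shows "(\<Sum>x\<in>{u..<u+t}. Y (x mod m)) = F m - F u + F (u + t - m)"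
proof -
  have "(\<Sum>x\<in>{u..<u+t}. Y (x mod m)) = (\<Sum>x\<in>{u..<m}. Y (x mod m)) + (\<Sum>x\<in>{m..<u+t}. Y (x mod m))"
    by (rule sum.atLeastLessThan_concat[symmetric]) (use assms in auto)
  moreover have "(\<Sum>x\<in>{u..<m}. Y (x mod m)) = F m - F u"
    using win_in[of u "m - u"] assms by simp
  moreover have "(\<Sum>x\<in>{m..<u+t}. Y (x mod m)) = F (u + t - m)"
  proof -
    have "(\<Sum>x\<in>{m..<u+t}. Y (x mod m)) = (\<Sum>x\<in>{0+m..<(u+t-m)+m}. Y (x mod m))"
      using assms by simp
    also have "\<dots> = (\<Sum>x\<in>{0..<u+t-m}. Y ((x + m) mod m))"
      by (rule sum.shift_bounds_nat_ivl)
    also have "\<dots> = (\<Sum>x\<in>{0..<u+t-m}. Y x)"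
      by (rule sum.cong) (use assms in auto)
    finally show ?thesis unfolding F_def by (simp add: lessThan_atLeast0)
  qed
  ultimately show ?thesis by simp
qed

lemma win_upper: assumes "u < m" "s + 1 < m"
  shows "(\<Sum>x\<in>{u..<u+s}. Y (x mod m)) * real w \<le> g s"
proof (cases "u + s \<le> m")
  case True
  show ?thesis
  proof (cases "u = 0")
    case u0: True
    show ?thesis
    proof (cases "s = 0")
      case True then show ?thesis by (simp add: g_def)
    next
      case False
      then show ?thesis using win_in[OF \<open>u + s \<le> m\<close>] u0 F_g[of s] F0 g_mono[of "s - 1" s] assms by simp
    qed
  next
    case False
    have "(\<Sum>x\<in>{u..<u+s}. Y (x mod m)) * real w = F (u+s) * real w - F u * real w"
      by (simp only: win_in[OF True] left_diff_distrib)
    also have "\<dots> = g (u - 1 + s) - g (u - 1)" using F_g[of "u+s"] F_g[of u] False True assms by simp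
    also have "\<dots> \<le> g s" using g_sub_sup[of "u - 1" s] by simp
    finally show ?thesis .
  qed
next
  case False
  have u1: "1 \<le> u" using False assms by simp
  have "(\<Sum>x\<in>{u..<u+s}. Y (x mod m)) * real w = F m * real w - F u * real w + F (u + s - m) * real w"
  proof -
    have wo: "(\<Sum>x\<in>{u..<u+s}. Y (x mod m)) = F m - F u + F (u + s - m)"
      using win_out[of u s] False assms by simp
    show ?thesis by (simp only: wo left_diff_distrib distrib_right)
  qed
  also have "\<dots> = g (m - 1) - g (u - 1) + g (u + s - m - 1)"
    using F_g[of m] F_g[of u] F_g[of "u + s - m"] False assms u1 by simp
  also have "g (m - 1) - g (u - 1) = g (m - u)" using g_sym[of "m - u"] u1 assms by simp
  also have "g (m - u) + g (u + s - m - 1) \<le> g (m - u + (u + s - m - 1) + 1)" using g_sub_sup by simp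
  also have "m - u + (u + s - m - 1) + 1 = s" using False assms by simp
  finally show ?thesis by simp
qed

lemma win_lower: assumes "u < m" "s + 1 < m"
  shows "g s \<le> (\<Sum>x\<in>{u..<u+(s+1)}. Y (x mod m)) * real w"
proof (cases "u + (s+1) \<le> m")
  case True
  show ?thesis
  proof (cases "u = 0")
    case u0: True
    then show ?thesis using win_in[OF True] F_g[of "s+1"] F0 assms by simp
  next
    case False
    have "g s \<le> g (u - 1 + s + 1) - g (u - 1)" using g_sub_sup[of "u - 1" s] by simp
    also have "\<dots> = F (u+(s+1)) * real w - F u * real w" using F_g[of "u+(s+1)"] F_g[of u] False True assms by simp
    also have "\<dots> = (\<Sum>x\<in>{u..<u+(s+1)}. Y (x mod m)) * real w"
      by (simp only: win_in[OF True] left_diff_distrib)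
    finally show ?thesis .
  qed
next
  case False
  have u1: "1 \<le> u" using False assms by simp
  have "g s = g (m - u + (u + (s+1) - m - 1))" using False assms by (simp add: algebra_simps)
  also have "\<dots> \<le> g (m - u) + g (u + (s+1) - m - 1)" using g_sub_sup by simp
  also have "g (m - u) = g (m - 1) - g (u - 1)" using g_sym[of "m - u"] u1 assms by simp
  also have "g (m - 1) - g (u - 1) + g (u + (s+1) - m - 1) = F m * real w - F u * real w + F (u + (s+1) - m) * real w"
    using F_g[of m] F_g[of u] F_g[of "u + (s+1) - m"] False assms u1 by simp
  also have "\<dots> = (\<Sum>x\<in>{u..<u+(s+1)}. Y (x mod m)) * real w"
  proof -
    have wo: "(\<Sum>x\<in>{u..<u+(s+1)}. Y (x mod m)) = F m - F u + F (u + (s+1) - m)"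
      using win_out[of u "s+1"] False assms by simp
    show ?thesis by (simp only: wo left_diff_distrib distrib_right)
  qed
  finally show ?thesis .
qed

lemma win_mod: "(\<Sum>x\<in>{u..<u+t}. Y (x mod m)) = (\<Sum>x\<in>{u mod m..<u mod m+t}. Y (x mod m))"
proof -
  define k where "k = u div m * m"
  have u: "u = u mod m + k" unfolding k_def by simp
  have "(\<Sum>x\<in>{u..<u+t}. Y (x mod m)) = (\<Sum>x\<in>{u mod m + k..<(u mod m+t) + k}. Y (x mod m))"
    using u by (metis add.commute add.left_commute)
  also have "\<dots> = (\<Sum>x\<in>{u mod m..<u mod m+t}. Y ((x + k) mod m))"
    by (rule sum.shift_bounds_nat_ivl)
  also have "\<dots> = (\<Sum>x\<in>{u mod m..<u mod m+t}. Y (x mod m))"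
    unfolding k_def by simp
  finally show ?thesis .
qed

lemma sum_cyc: assumes "l \<le> m"
  shows "sum Y (cyc_interval m u l) = (\<Sum>x\<in>{u..<u+l}. Y (x mod m))"
proof -
  have inj: "inj_on (\<lambda>x. x mod m) {u..<u+l}"
  proof
    fix x y assume xy: "x \<in> {u..<u+l}" "y \<in> {u..<u+l}" "x mod m = y mod m"
    show "x = y"
    proof (rule ccontr)
      assume "x \<noteq> y"
      then consider "x < y" | "y < x" by linarith
      then show False
      proof cases
        case 1
        then have "m dvd y - x" using xy by (metis less_imp_le mod_eq_dvd_iff_nat)
        moreover have "0 < y - x" "y - x < m" using 1 xy assms by auto
        ultimately show False using nat_dvd_not_less by blast
      next
        case 2
        then have "m dvd x - y" using xy by (metis less_imp_le mod_eq_dvd_iff_nat)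
        moreover have "0 < x - y" "x - y < m" using 2 xy assms by auto
        ultimately show False using nat_dvd_not_less by blast
      qed
    qed
  qed
  show ?thesis unfolding cyc_interval_def using sum.reindex[OF inj, of Y] by simp
qed

lemma window_bounds: assumes "s + 1 < m"
  shows "sum Y (cyc_interval m v s) * real w \<le> g s"
    and "g s \<le> sum Y (cyc_interval m u (s + 1)) * real w"
proof -
  have m0: "0 < m" using assms by simp
  show "sum Y (cyc_interval m v s) * real w \<le> g s"
    using sum_cyc[of s v] win_mod[of v s] win_upper[of "v mod m" s] assms m0 by simp
  show "g s \<le> sum Y (cyc_interval m u (s + 1)) * real w"
    using sum_cyc[of "s+1" u] win_mod[of u "s+1"] win_lower[of "u mod m" s] assms m0 by simp
qed

end

theorem lemma3p9:
  fixes k n c h w u v l s :: nat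
  assumes "k \<ge> 2" and "n > 2 ^ k" and "c = 2 ^ k - 2" and "coprime c (n - 1)"
    and "h > 0" and "w \<ge> 1" and "w \<le> n - 2"
    and "int h * (int n - 1) - int w * int c = 1"
    and "\<forall>h' w'. h' > 0 \<and> w' \<ge> 1 \<and> w' \<le> n - 2 \<and> int h' * (int n - 1) - int w' * int c = 1
            \<longrightarrow> w \<le> w'"
    and "cyc_interval (n - 1) u l \<inter> cyc_interval (n - 1) v s = {}"
    and "l + s \<le> c"
  shows "sum (coprime_hider n c h w) (cyc_interval (n - 1) u l)
       + sum (coprime_hider n c h w) (cyc_interval (n - 1) v s)
       \<le> sum (coprime_hider n c h w) (cyc_interval (n - 1) u (l + s + 1))"
proof -
  define m where "m = n - 1"
  have k4: "(4::nat) \<le> 2 ^ k"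
  proof -
    have "(2::nat) ^ 2 \<le> 2 ^ k" using assms(1) by (rule power_increasing) simp
    then show ?thesis by simp
  qed
  have c2: "2 \<le> c" using assms(3) k4 by simp
  have mc: "c + 2 \<le> m" using assms(2,3) k4 unfolding m_def by simp
  have n1: "n = Suc m" using assms(2) unfolding m_def by simp
  have eqi: "int (h * m) = int (w * c + 1)"
    using assms(8) n1 by (simp add: algebra_simps)
  have eqn: "h * m = w * c + 1" using eqi by (simp only: of_nat_eq_iff)
  have wm: "w + 1 \<le> m" using assms(7,6) unfolding m_def by simp
  have hc: "h \<le> c"
  proof (rule ccontr)
    assume "\<not> h \<le> c"
    then have "c + 1 \<le> h" by simp
    then have "(c + 1) * m \<le> h * m" by (rule mult_le_mono1)
    moreover have "c * (w + 1) \<le> c * m" using wm by (rule mult_le_mono2)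
    ultimately have "c * w + c + m \<le> h * m" by (simp add: algebra_simps)
    then show False using eqn c2 by (simp add: algebra_simps)
  qed
  interpret H: hid c h m w
    by unfold_locales (use assms(5,6) hc eqn wm in auto)
  let ?Y = "coprime_hider (Suc m) c h w"
  have s1: "s + 1 < m" and ls: "l + s + 1 \<le> m" using assms(11) mc by auto
  have split: "sum ?Y (cyc_interval m u (l + s + 1))
      = sum ?Y (cyc_interval m u l) + sum ?Y (cyc_interval m (u + l) (s + 1))"
  proof -
    have "sum ?Y (cyc_interval m u (l + s + 1)) = (\<Sum>x\<in>{u..<u+(l+s+1)}. ?Y (x mod m))"
      using H.sum_cyc[OF ls] by simp
    also have "\<dots> = (\<Sum>x\<in>{u..<u+l}. ?Y (x mod m)) + (\<Sum>x\<in>{u+l..<(u+l)+(s+1)}. ?Y (x mod m))"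
      by (simp add: sum.atLeastLessThan_concat[symmetric] add.assoc)
    also have "\<dots> = sum ?Y (cyc_interval m u l) + sum ?Y (cyc_interval m (u + l) (s + 1))"
      using H.sum_cyc[of l u] H.sum_cyc[of "s+1" "u+l"] ls by simp
    finally show ?thesis .
  qed
  have wpos: "0 < real w" using assms(6) by simp
  have "sum ?Y (cyc_interval m v s) * real w \<le> sum ?Y (cyc_interval m (u + l) (s + 1)) * real w"
    using H.window_bounds(1)[OF s1, of v] H.window_bounds(2)[OF s1, of "u + l"] by linarith
  then have "sum ?Y (cyc_interval m v s) \<le> sum ?Y (cyc_interval m (u + l) (s + 1))"
    using wpos by simp
  then show ?thesis using split unfolding m_def[symmetric] n1 by simp
qed

end
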